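(* In the setting of the context, assume every irreducible $T$-module is thin, and let $\mathbf{C}\in T$ be the unique element satisfying the three equations $$\mathbf{A}+\frac{q\mathbf{B}\mathbf{C}-q^{-1}\mathbf{C}\mathbf{B}}{q^2-q^{-2}}=\frac{(\mathbf{a}+\mathbf{a}^{-1})(\Lambda+\Lambda^{-1})+(\mathbf{b}+\mathbf{b}^{-1})(\mathbf{c}+\mathbf{c}^{-1})}{q+q^{-1}},$$ $$\mathbf{B}+\frac{q\mathbf{C}\mathbf{A}-q^{-1}\mathbf{A}\mathbf{C}}{q^2-q^{-2}}=\frac{(\mathbf{b}+\mathbf{b}^{-1})(\Lambda+\Lambda^{-1})+(\mathbf{c}+\mathbf{c}^{-1})(\mathbf{a}+\mathbf{a}^{-1})}{q+q^{-1}},$$ $$\mathbf{C}+\frac{q\mathbf{A}\mathbf{B}-q^{-1}\mathbf{B}\mathbf{A}}{q^2-q^{-2}}=\frac{(\mathbf{c}+\mathbf{c}^{-1})(\Lambda+\Lambda^{-1})+(\mathbf{a}+\mathbf{a}^{-1})(\mathbf{b}+\mathbf{b}^{-1})}{q+q^{-1}}.$$ Then each of $$\mathbf{A}+\frac{q\mathbf{B}\mathbf{C}-q^{-1}\mathbf{C}\mathbf{B}}{q^2-q^{-2}},\quad \mathbf{B}+\frac{q\mathbf{C}\mathbf{A}-q^{-1}\mathbf{A}\mathbf{C}}{q^2-q^{-2}},\quad \mathbf{C}+\frac{q\mathbf{A}\mathbf{B}-q^{-1}\mathbf{B}\mathbf{A}}{q^2-q^{-2}}$$ is central in $T$.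
   Context: Fix a nonzero $q\in\mathbb{C}$ with $q^4\neq1$. Let $\Gamma$ be a finite connected distance-regular graph (undirected, no loops or multiple edges) with vertex set $X$, distance $\partial$, diameter $D\ge3$; $V=\mathbb{C}^X$. $A$ is the adjacency matrix, $E_0,\dots,E_D$ the primitive idempotents of the Bose–Mesner algebra with $E_0=|X|^{-1}J$ and $E_1,\dots,E_D$ a $Q$-polynomial ordering; $A=\sum\theta_iE_i$. Fix a vertex $x$; $E_i^*$ is the diagonal $0/1$ matrix projecting onto vertices at distance $i$ from $x$; $A^*$ is diagonal with $(y,y)$-entry $|X|(E_1)_{xy}$, $A^*=\sum\theta_i^*E_i^*$; $T$ is the algebra generated by $A,A^*$. Assume $q$-Racah type: $\theta_i=w+uq^{2i-D}+vq^{D-2i}$, $\theta_i^*=w^*+u^*q^{2i-D}+v^*q^{D-2i}$, $u,u^*,v,v^*\neq0$; fix $a,b$ with $a^2=u/v$, $b^2=u^*/v^*$; $\mathbf{A}=(A-wI)/(av)$, $\mathbf{B}=(A^*-w^*I)/(bv^* )$. For an irreducible $T$-module $W\subseteq V$: endpoint $\rho=\min\{i:E_i^*W\ne0\}$, dual endpoint $\tau=\min\{i:E_iW\neq0\}$, diameter $d=|\{i:E^*_iW\ne0\}|-1$; thin means $\dim E^*_iW\le1$ for all $i$. Put $a(W)=aq^{2\tau+d-D}$, $b(W)=bq^{2\rho+d-D}$. If $W$ is thin, $(\mathbf{A}|_W,\{E_{\tau+i}|_W\}_{i=0}^d,\mathbf{B}|_W,\{E^*_{\rho+i}|_W\}_{i=0}^d)$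 is a Leonard system with eigenvalues $\vartheta_i=a(W)q^{2i-d}+a(W)^{-1}q^{d-2i}$ and dual eigenvalues $\vartheta^*_i=b(W)q^{2i-d}+b(W)^{-1}q^{d-2i}$; let $\kappa=0$ if $d=0$ and, for $d\ge1$, $\kappa=a(W)b(W)^{-1}q^{d-1}+a(W)^{-1}b(W)q^{1-d}+\phi_1/((q-q^{-1})(q^d-q^{-d}))$ where $\phi_1=(\vartheta^*_0-\vartheta^*_1)(\mathrm{trace}(E^*_\rho\mathbf{A}|_W)-\vartheta_d)$; $c(W)$ is a root of $\xi^2-\kappa\xi+1=0$ (defined up to reciprocal). Isomorphism of irreducible modules: linear bijection commuting with $T$; $\Psi$ = set of types; for $\psi\in\Psi$, $a(\psi),b(\psi),d(\psi),c(\psi)$ are $a(W),b(W)$, the diameter, and (a fixed choice of) $c(W)$ for $W$ of type $\psi$. $V_\psi$ = span of irreducible modules of type $\psi$, $V=\bigoplus_\psi V_\psi$, $e_\psi$ = identity on $V_\psi$, $0$ on other $V_\lambda$. Define $\mathbf{a}=\sum_\psi a(\psi)e_\psi$, $\mathbf{b}=\sum_\psi b(\psi)e_\psi$, $\mathbf{c}=\sum_\psi c(\psi)e_\psi$, $\Lambda=\sum_\psi q^{d(\psi)+1}e_\psi$ (these are invertible). *)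

theory Defs
  imports Complex_Main "Jordan_Normal_Form.Matrix"
begin

definition simple_graph :: "nat \<Rightarrow> (nat \<Rightarrow> nat \<Rightarrow> bool) \<Rightarrow> bool" where
  "simple_graph n G \<longleftrightarrow> (\<forall>x y. G x y \<longrightarrow> x < n \<and> y < n) \<and> (\<forall>x y. G x y \<longrightarrow> G y x) \<and> (\<forall>x. \<not> G x x)"

definition connected_graph :: "nat \<Rightarrow> (nat \<Rightarrow> nat \<Rightarrow> bool) \<Rightarrow> bool" where
  "connected_graph n G \<longleftrightarrow> (\<forall>x<n. \<forall>y<n. \<exists>k. (G ^^ k) x y)"

definition gdist :: "(nat \<Rightarrow> nat \<Rightarrow> bool) \<Rightarrow> nat \<Rightarrow> nat \<Rightarrow> nat" where
  "gdist G x y = (LEAST k. (G ^^ k) x y)"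

definition diameter :: "nat \<Rightarrow> (nat \<Rightarrow> nat \<Rightarrow> bool) \<Rightarrow> nat" where
  "diameter n G = Max {gdist G x y | x y. x < n \<and> y < n}"

definition distance_regular :: "nat \<Rightarrow> (nat \<Rightarrow> nat \<Rightarrow> bool) \<Rightarrow> bool" where
  "distance_regular n G \<longleftrightarrow> 0 < n \<and> simple_graph n G \<and> connected_graph n G \<and>
     (\<forall>i j x y x' y'. x < n \<longrightarrow> y < n \<longrightarrow> x' < n \<longrightarrow> y' < n \<longrightarrow>
        gdist G x y = gdist G x' y' \<longrightarrow>
        card {z. z < n \<and> gdist G x z = i \<and> gdist G y z = j}
          = card {z. z < n \<and> gdist G x' z = i \<and> gdist G y' z = j})"

definition adj_mat :: "nat \<Rightarrow> (nat \<Rightarrow> nat \<Rightarrow> bool) \<Rightarrow> complex mat" where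
  "adj_mat n G = mat n n (\<lambda>(x, y). if G x y then 1 else 0)"

definition all_ones :: "nat \<Rightarrow> complex mat" where
  "all_ones n = mat n n (\<lambda>_. 1)"

definition msum :: "nat \<Rightarrow> (nat \<Rightarrow> complex mat) \<Rightarrow> nat set \<Rightarrow> complex mat" where
  "msum n f I = mat n n (\<lambda>(x, y). \<Sum>i\<in>I. f i $$ (x, y))"

definition hadamard :: "nat \<Rightarrow> complex mat \<Rightarrow> complex mat \<Rightarrow> complex mat" where
  "hadamard n M N = mat n n (\<lambda>(x, y). M $$ (x, y) * N $$ (x, y))"

definition mtrace :: "complex mat \<Rightarrow> complex" where
  "mtrace M = (\<Sum>i<dim_row M. M $$ (i, i))"

text \<open>Bose-Mesner algebra: the span of the distance matrices A_0, ..., A_D\<close>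
definition bose_mesner :: "nat \<Rightarrow> (nat \<Rightarrow> nat \<Rightarrow> bool) \<Rightarrow> complex mat set" where
  "bose_mesner n G = {M \<in> carrier_mat n n. \<exists>c. \<forall>x<n. \<forall>y<n. M $$ (x, y) = c (gdist G x y)}"

text \<open>E_0,...,E_D are the primitive idempotents of the Bose-Mesner algebra
  (D+1 = dim of the algebra nonzero pairwise orthogonal idempotents of it summing to I).\<close>
definition primitive_idempotents ::
  "nat \<Rightarrow> (nat \<Rightarrow> nat \<Rightarrow> bool) \<Rightarrow> nat \<Rightarrow> (nat \<Rightarrow> complex mat) \<Rightarrow> bool" where
  "primitive_idempotents n G D Eid \<longleftrightarrow>
     (\<forall>i\<le>D. Eid i \<in> bose_mesner n G \<and> Eid i \<noteq> 0\<^sub>m n n) \<and>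
     (\<forall>i\<le>D. \<forall>j\<le>D. Eid i * Eid j = (if i = j then Eid i else 0\<^sub>m n n)) \<and>
     msum n Eid {..D} = 1\<^sub>m n"

text \<open>Q-polynomial ordering: Krein parameter q^h_{1j} (coefficient of E_h in E_1 o E_j)
  vanishes for |h-j|>1 and is nonzero for |h-j|=1.\<close>
definition q_polynomial_ordering :: "nat \<Rightarrow> (nat \<Rightarrow> complex mat) \<Rightarrow> nat \<Rightarrow> bool" where
  "q_polynomial_ordering n Eid D \<longleftrightarrow>
     (\<forall>h\<le>D. \<forall>j\<le>D.
        ((h > j + 1 \<or> j > h + 1) \<longrightarrow> hadamard n (Eid 1) (Eid j) * Eid h = 0\<^sub>m n n) \<and>
        ((h = j + 1 \<or> j = h + 1) \<longrightarrow> hadamard n (Eid 1) (Eid j) * Eid h \<noteq> 0\<^sub>m n n))"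

definition dual_idem :: "nat \<Rightarrow> (nat \<Rightarrow> nat \<Rightarrow> bool) \<Rightarrow> nat \<Rightarrow> nat \<Rightarrow> complex mat" where
  "dual_idem n G x i = mat n n (\<lambda>(y, z). if y = z \<and> gdist G x y = i then 1 else 0)"

definition dual_adj :: "nat \<Rightarrow> (nat \<Rightarrow> complex mat) \<Rightarrow> nat \<Rightarrow> complex mat" where
  "dual_adj n Eid x = mat n n (\<lambda>(y, z). if y = z then of_nat n * Eid 1 $$ (x, y) else 0)"

inductive_set term_alg :: "nat \<Rightarrow> complex mat \<Rightarrow> complex mat \<Rightarrow> complex mat set"
  for n :: nat and A :: "complex mat" and As :: "complex mat" where
  one: "1\<^sub>m n \<in> term_alg n A As"
| genA: "A \<in> term_alg n A As"
| genAs: "As \<in> term_alg n A As"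
| add: "M \<in> term_alg n A As \<Longrightarrow> N \<in> term_alg n A As \<Longrightarrow> M + N \<in> term_alg n A As"
| mult: "M \<in> term_alg n A As \<Longrightarrow> N \<in> term_alg n A As \<Longrightarrow> M * N \<in> term_alg n A As"
| smult: "M \<in> term_alg n A As \<Longrightarrow> c \<cdot>\<^sub>m M \<in> term_alg n A As"

definition tmodule :: "nat \<Rightarrow> complex mat set \<Rightarrow> complex vec set \<Rightarrow> bool" where
  "tmodule n T W \<longleftrightarrow> W \<subseteq> carrier_vec n \<and> 0\<^sub>v n \<in> W \<and> (\<forall>u\<in>W. \<forall>v\<in>W. u + v \<in> W) \<and>
     (\<forall>c. \<forall>u\<in>W. c \<cdot>\<^sub>v u \<in> W) \<and> (\<forall>M\<in>T. \<forall>u\<in>W. M *\<^sub>v u \<in> W)"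

definition irreducible_tmodule :: "nat \<Rightarrow> complex mat set \<Rightarrow> complex vec set \<Rightarrow> bool" where
  "irreducible_tmodule n T W \<longleftrightarrow> tmodule n T W \<and> W \<noteq> {0\<^sub>v n} \<and>
     (\<forall>W'. tmodule n T W' \<and> W' \<subseteq> W \<longrightarrow> W' = {0\<^sub>v n} \<or> W' = W)"

definition mod_iso :: "nat \<Rightarrow> complex mat set \<Rightarrow> complex vec set \<Rightarrow> complex vec set \<Rightarrow> bool" where
  "mod_iso n T W W' \<longleftrightarrow> (\<exists>f. bij_betw f W W' \<and> (\<forall>u\<in>W. \<forall>v\<in>W. f (u + v) = f u + f v) \<and>
     (\<forall>c. \<forall>u\<in>W. f (c \<cdot>\<^sub>v u) = c \<cdot>\<^sub>v f u) \<and> (\<forall>M\<in>T. \<forall>u\<in>W. f (M *\<^sub>v u) = M *\<^sub>v f u))"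

definition endpoint :: "nat \<Rightarrow> (nat \<Rightarrow> nat \<Rightarrow> bool) \<Rightarrow> nat \<Rightarrow> complex vec set \<Rightarrow> nat" where
  "endpoint n G x W = (LEAST i. \<exists>w\<in>W. dual_idem n G x i *\<^sub>v w \<noteq> 0\<^sub>v n)"

definition dual_endpoint :: "nat \<Rightarrow> (nat \<Rightarrow> complex mat) \<Rightarrow> nat \<Rightarrow> complex vec set \<Rightarrow> nat" where
  "dual_endpoint n Eid D W = (LEAST i. i \<le> D \<and> (\<exists>w\<in>W. Eid i *\<^sub>v w \<noteq> 0\<^sub>v n))"

definition mod_diameter :: "nat \<Rightarrow> (nat \<Rightarrow> nat \<Rightarrow> bool) \<Rightarrow> nat \<Rightarrow> complex vec set \<Rightarrow> nat" where
  "mod_diameter n G x W = card {i. \<exists>w\<in>W. dual_idem n G x i *\<^sub>v w \<noteq> 0\<^sub>v n} - 1"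

definition thin_module :: "nat \<Rightarrow> (nat \<Rightarrow> nat \<Rightarrow> bool) \<Rightarrow> nat \<Rightarrow> complex vec set \<Rightarrow> bool" where
  "thin_module n G x W \<longleftrightarrow> (\<forall>i. \<exists>w0. \<forall>w\<in>W. \<exists>c. dual_idem n G x i *\<^sub>v w = c \<cdot>\<^sub>v w0)"

text \<open>trace of the restriction of L to an L-invariant subspace W: trace of the matrix of L|_W
  w.r.t. a basis of W (the columns of Bm)\<close>
definition restr_trace :: "nat \<Rightarrow> complex mat \<Rightarrow> complex vec set \<Rightarrow> complex" where
  "restr_trace n L W = (THE t. \<exists>k Bm Cm. Bm \<in> carrier_mat n k \<and> Cm \<in> carrier_mat k k \<and>
      (\<forall>y\<in>carrier_vec k. Bm *\<^sub>v y = 0\<^sub>v n \<longrightarrow> y = 0\<^sub>v k) \<and>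
      W = {Bm *\<^sub>v y | y. y \<in> carrier_vec k} \<and> L * Bm = Bm * Cm \<and> t = mtrace Cm)"

definition mod_a :: "nat \<Rightarrow> (nat \<Rightarrow> nat \<Rightarrow> bool) \<Rightarrow> (nat \<Rightarrow> complex mat) \<Rightarrow> nat \<Rightarrow> nat \<Rightarrow>
    complex \<Rightarrow> complex \<Rightarrow> complex vec set \<Rightarrow> complex" where
  "mod_a n G Eid D x q a W =
     a * q powi (2 * int (dual_endpoint n Eid D W) + int (mod_diameter n G x W) - int D)"

definition mod_b :: "nat \<Rightarrow> (nat \<Rightarrow> nat \<Rightarrow> bool) \<Rightarrow> nat \<Rightarrow> nat \<Rightarrow>
    complex \<Rightarrow> complex \<Rightarrow> complex vec set \<Rightarrow> complex" where
  "mod_b n G D x q b W =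
     b * q powi (2 * int (endpoint n G x W) + int (mod_diameter n G x W) - int D)"

definition kappa_val :: "complex \<Rightarrow> complex \<Rightarrow> complex \<Rightarrow> nat \<Rightarrow> complex \<Rightarrow> complex" where
  "kappa_val q aW bW d tr =
     (if d = 0 then 0 else
      (let th = (\<lambda>i::nat. aW * q powi (2 * int i - int d) + inverse aW * q powi (int d - 2 * int i));
           ths = (\<lambda>i::nat. bW * q powi (2 * int i - int d) + inverse bW * q powi (int d - 2 * int i));
           phi1 = (ths 0 - ths 1) * (tr - th d)
       in aW * inverse bW * q powi (int d - 1) + inverse aW * bW * q powi (1 - int d)
          + phi1 / ((q - inverse q) * (q powi int d - q powi (- int d)))))"

definition mod_kappa :: "nat \<Rightarrow> (nat \<Rightarrow> nat \<Rightarrow> bool) \<Rightarrow> (nat \<Rightarrow> complex mat) \<Rightarrow> nat \<Rightarrow> nat \<Rightarrow>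
    complex \<Rightarrow> complex \<Rightarrow> complex \<Rightarrow> complex mat \<Rightarrow> complex vec set \<Rightarrow> complex" where
  "mod_kappa n G Eid D x q a b AA W =
     kappa_val q (mod_a n G Eid D x q a W) (mod_b n G D x q b W) (mod_diameter n G x W)
       (restr_trace n (dual_idem n G x (endpoint n G x W) * AA) W)"

text \<open>M = sum over types psi of f(psi) e_psi: M acts on each irreducible module W as the scalar f(W)\<close>
definition acts_as_scalar :: "nat \<Rightarrow> complex mat set \<Rightarrow> complex mat \<Rightarrow> (complex vec set \<Rightarrow> complex) \<Rightarrow> bool" where
  "acts_as_scalar n T M f \<longleftrightarrow> M \<in> carrier_mat n n \<and>
     (\<forall>W. irreducible_tmodule n T W \<longrightarrow> (\<forall>y\<in>W. M *\<^sub>v y = f W \<cdot>\<^sub>v y))"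

definition zlhs :: "complex \<Rightarrow> complex mat \<Rightarrow> complex mat \<Rightarrow> complex mat \<Rightarrow> complex mat" where
  "zlhs q X Y Z = X + (1 / (q^2 - inverse q ^ 2)) \<cdot>\<^sub>m (q \<cdot>\<^sub>m (Y * Z) - inverse q \<cdot>\<^sub>m (Z * Y))"

definition zrhs :: "complex \<Rightarrow> complex mat \<Rightarrow> complex mat \<Rightarrow> complex mat \<Rightarrow> complex mat \<Rightarrow>
    complex mat \<Rightarrow> complex mat \<Rightarrow> complex mat \<Rightarrow> complex mat \<Rightarrow> complex mat" where
  "zrhs q X Xi L Li Y Yi Z Zi = (1 / (q + inverse q)) \<cdot>\<^sub>m ((X + Xi) * (L + Li) + (Y + Yi) * (Z + Zi))"

definition central_in :: "complex mat set \<Rightarrow> complex mat \<Rightarrow> bool" where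
  "central_in T X \<longleftrightarrow> X \<in> T \<and> (\<forall>M\<in>T. X * M = M * X)"

end

theory Submission
  imports Defs "HOL-Computational_Algebra.Polynomial" "Jordan_Normal_Form.Gauss_Jordan_Elimination"
begin

definition ip :: "nat \<Rightarrow> complex vec \<Rightarrow> complex vec \<Rightarrow> complex" where
 "ip n u v = (\<Sum>i<n. u$i * cnj (v$i))"
definition subsp :: "nat \<Rightarrow> complex vec set \<Rightarrow> bool" where
 "subsp n W \<longleftrightarrow> W \<subseteq> carrier_vec n \<and> 0\<^sub>v n \<in> W \<and> (\<forall>u\<in>W. \<forall>v\<in>W. u+v\<in>W) \<and> (\<forall>c. \<forall>u\<in>W. c \<cdot>\<^sub>v u \<in> W)"
definition lead :: "nat \<Rightarrow> complex vec set \<Rightarrow> nat set" where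
 "lead n W = {i. i<n \<and> (\<exists>w\<in>W. w$i \<noteq> 0 \<and> (\<forall>j<i. w$j = 0))}"

lemma subsp_diff: assumes "subsp n W" "u\<in>W" "v\<in>W" shows "u - v \<in> W"
proof -
  have c: "u \<in> carrier_vec n" "v \<in> carrier_vec n" using assms unfolding subsp_def by auto
  have "u - v = u + (-1) \<cdot>\<^sub>v v" using c by (intro eq_vecI) auto
  thus ?thesis using assms unfolding subsp_def by auto
qed

lemma lead_sub:
  assumes W: "subsp n W" and W': "subsp n W'" and sub: "W' \<subseteq> W" and l: "lead n W \<subseteq> lead n W'"
  shows "W \<subseteq> W'"
proof -
  have main: "\<forall>w\<in>W. (\<forall>j<n - m. w$j = 0) \<longrightarrow> w \<in> W'" for m
  proof (induction m)
    case 0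
    show ?case
    proof (intro ballI impI)
      fix w assume w: "w \<in> W" "\<forall>j<n - 0. w $ j = 0"
      have "w \<in> carrier_vec n" using w W unfolding subsp_def by auto
      hence "w = 0\<^sub>v n" using w by (intro eq_vecI) auto
      thus "w \<in> W'" using W' unfolding subsp_def by auto
    qed
  next
    case (Suc m)
    show ?case
    proof (cases "n \<le> m")
      case True
      then show ?thesis using Suc by auto
    next
      case False
      define k where "k = n - Suc m"
      have k: "k < n" "n - m = Suc k" using False unfolding k_def by auto
      show ?thesis
      proof (intro ballI impI)
        fix w assume w: "w \<in> W" "\<forall>j<n - Suc m. w $ j = 0"
        have wc: "w \<in> carrier_vec n" using w W unfolding subsp_def by auto
        show "w \<in> W'"
        proof (cases "w$k = 0")
          case True
          have "\<forall>j<n - m. w $ j = 0" using w True k k_def less_Suc_eq by auto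
          then show ?thesis using Suc w by auto
        next
          case False
          hence "k \<in> lead n W" using k w unfolding lead_def k_def by auto
          with l obtain w' where w': "w' \<in> W'" "w'$k \<noteq> 0" "\<forall>j<k. w'$j = 0"
            unfolding lead_def by auto
          have w'c: "w' \<in> carrier_vec n" using w' W' unfolding subsp_def by auto
          define c where "c = w$k / w'$k"
          define w2 where "w2 = w - c \<cdot>\<^sub>v w'"
          have "c \<cdot>\<^sub>v w' \<in> W" using w' sub W unfolding subsp_def by auto
          hence w2W: "w2 \<in> W" unfolding w2_def using subsp_diff[OF W w(1)] by auto
          have "\<forall>j<n - m. w2 $ j = 0"
          proof (intro allI impI)
            fix j assume j: "j < n - m"
            hence jn: "j < n" by auto
            show "w2 $ j = 0"
            proof (cases "j = k")
              case True
              then show ?thesis using jn wc w'c w'(2) unfolding w2_def c_def by auto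
            next
              case False
              hence "j < k" using j k by auto
              then show ?thesis using jn wc w'c w'(3) w(2) unfolding w2_def k_def by auto
            qed
          qed
          hence "w2 \<in> W'" using Suc w2W by auto
          moreover have "c \<cdot>\<^sub>v w' \<in> W'" using w' W' unfolding subsp_def by auto
          ultimately have "w2 + c \<cdot>\<^sub>v w' \<in> W'" using W' unfolding subsp_def by auto
          moreover have "w2 + c \<cdot>\<^sub>v w' = w" unfolding w2_def using wc w'c by (intro eq_vecI) auto
          ultimately show ?thesis by simp
        qed
      qed
    qed
  qed
  show ?thesis using main[of n] by auto
qed

lemma lead_mono: "W' \<subseteq> W \<Longrightarrow> lead n W' \<subseteq> lead n W"
  unfolding lead_def by blast

lemma lead_card_less:
  assumes "subsp n W" "subsp n W'" "W' \<subseteq> W" "W' \<noteq> W"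
  shows "card (lead n W') < card (lead n W)"
proof -
  have "\<not> lead n W \<subseteq> lead n W'" using lead_sub[OF assms(1-3)] assms(3,4) by auto
  hence "lead n W' \<subset> lead n W" using lead_mono[OF assms(3)] by auto
  moreover have "finite (lead n W)" unfolding lead_def by auto
  ultimately show ?thesis by (rule psubset_card_mono[rotated])
qed


lemma ip_add_l: "u \<in> carrier_vec n \<Longrightarrow> v \<in> carrier_vec n \<Longrightarrow> ip n (u+v) x = ip n u x + ip n v x"
  unfolding ip_def by (simp add: sum.distrib distrib_right)
lemma ip_add_r: "u \<in> carrier_vec n \<Longrightarrow> v \<in> carrier_vec n \<Longrightarrow> ip n x (u+v) = ip n x u + ip n x v"
  unfolding ip_def by (simp add: sum.distrib distrib_left)
lemma ip_smult_l: "u \<in> carrier_vec n \<Longrightarrow> ip n (c \<cdot>\<^sub>v u) x = c * ip n u x"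
  unfolding ip_def by (simp add: sum_distrib_left mult.assoc)
lemma ip_smult_r: "u \<in> carrier_vec n \<Longrightarrow> ip n x (c \<cdot>\<^sub>v u) = cnj c * ip n x u"
  unfolding ip_def by (simp add: sum_distrib_left mult.assoc mult.left_commute)
lemma ip_minus_l: "u \<in> carrier_vec n \<Longrightarrow> v \<in> carrier_vec n \<Longrightarrow> ip n (u-v) x = ip n u x - ip n v x"
  unfolding ip_def by (simp add: sum_subtractf left_diff_distrib)
lemma ip_cnj: "ip n u v = cnj (ip n v u)"
  unfolding ip_def by (simp add: cnj_sum mult.commute)
lemma ip_zero_r: "ip n u (0\<^sub>v n) = 0"
  unfolding ip_def by simp
lemma ip_zero_l: "ip n (0\<^sub>v n) u = 0"
  unfolding ip_def by simp
lemma ip_self_zero: assumes "u \<in> carrier_vec n" "ip n u u = 0" shows "u = 0\<^sub>v n"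
proof -
  have "ip n u u = complex_of_real (\<Sum>i<n. (cmod (u$i))^2)"
    unfolding ip_def of_real_sum by (intro sum.cong) (simp_all add: complex_norm_square[symmetric] del: of_real_power)
  hence "(\<Sum>i<n. (cmod (u$i))^2) = 0" using assms(2) by (metis of_real_eq_0_iff)
  hence "\<forall>i\<in>{..<n}. (cmod (u$i))^2 = 0" by (subst sum_nonneg_eq_0_iff[symmetric]) auto
  thus ?thesis using assms by (intro eq_vecI) auto
qed

lemma proj_exists:
  assumes "subsp n W" "v \<in> carrier_vec n"
  shows "\<exists>w\<in>W. \<forall>x\<in>W. ip n (v - w) x = 0"
  using assms
proof (induction "card (lead n W)" arbitrary: W rule: less_induct)
  case less
  have Wc: "W \<subseteq> carrier_vec n" using less unfolding subsp_def by auto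
  show ?case
  proof (cases "W = {0\<^sub>v n}")
    case True
    then show ?thesis using ip_zero_r by auto
  next
    case False
    then obtain w0 where w0: "w0 \<in> W" "w0 \<noteq> 0\<^sub>v n" using less(2) unfolding subsp_def by auto
    have w0c: "w0 \<in> carrier_vec n" using w0 Wc by auto
    have nz: "ip n w0 w0 \<noteq> 0" using ip_self_zero w0 w0c by auto
    define W0 where "W0 = {x\<in>W. ip n x w0 = 0}"
    have sW0: "subsp n W0"
      using less(2) Wc unfolding subsp_def W0_def
      by (auto simp: ip_zero_l ip_add_l ip_smult_l subset_iff)
    have "W0 \<subseteq> W" "W0 \<noteq> W" using w0 nz unfolding W0_def by auto
    hence "card (lead n W0) < card (lead n W)" using lead_card_less less(2) sW0 by auto
    from less(1)[OF this sW0 less(3)] obtain w1 where w1: "w1 \<in> W0" "\<forall>x\<in>W0. ip n (v - w1) x = 0"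
      by auto
    have w1W: "w1 \<in> W" "w1 \<in> carrier_vec n" using w1 Wc unfolding W0_def by auto
    define r where "r = v - w1"
    have rc: "r \<in> carrier_vec n" using less(3) w1W unfolding r_def by auto
    define c where "c = ip n r w0 / ip n w0 w0"
    define w where "w = w1 + c \<cdot>\<^sub>v w0"
    have wW: "w \<in> W" unfolding w_def using less(2) w0 w1W unfolding subsp_def by auto
    have vw: "v - w = r - c \<cdot>\<^sub>v w0" unfolding w_def r_def using less(3) w1W w0c
      by (intro eq_vecI) auto
    show ?thesis
    proof (intro bexI[OF _ wW] ballI)
      fix x assume xW: "x \<in> W"
      have xc: "x \<in> carrier_vec n" using xW Wc by auto
      define e where "e = ip n x w0 / ip n w0 w0"
      define x0 where "x0 = x - e \<cdot>\<^sub>v w0"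
      have x0c: "x0 \<in> carrier_vec n" unfolding x0_def using xc w0c by auto
      have "ip n x0 w0 = 0" unfolding x0_def using xc w0c nz
        by (simp add: ip_minus_l ip_smult_l e_def)
      moreover have "x0 \<in> W" unfolding x0_def using subsp_diff[OF less(2) xW] less(2) w0
        unfolding subsp_def by auto
      ultimately have x0W0: "x0 \<in> W0" unfolding W0_def by auto
      have xx: "x = x0 + e \<cdot>\<^sub>v w0" unfolding x0_def using xc w0c by (intro eq_vecI) auto
      have i1: "ip n r x0 = 0" using w1 x0W0 unfolding r_def by auto
      have i2: "ip n w0 x0 = 0" using \<open>ip n x0 w0 = 0\<close> ip_cnj[of n w0 x0] by simp
      have "ip n (v - w) x = ip n r x - c * ip n w0 x"
        unfolding vw using rc w0c by (simp add: ip_minus_l ip_smult_l)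
      also have "\<dots> = cnj e * (ip n r w0 - c * ip n w0 w0)"
        unfolding xx using x0c w0c by (simp add: ip_add_r ip_smult_r i1 i2 algebra_simps)
      also have "\<dots> = 0" unfolding c_def using nz by simp
      finally show "ip n (v - w) x = 0" .
    qed
  qed
qed


definition adjm :: "nat \<Rightarrow> complex mat \<Rightarrow> complex mat" where
  "adjm n M = mat n n (\<lambda>(i,j). cnj (M $$ (j,i)))"

lemma adjm_carrier[simp]: "adjm n M \<in> carrier_mat n n" unfolding adjm_def by auto

lemma zero_lemmas: "c \<cdot>\<^sub>v 0\<^sub>v n = (0\<^sub>v n :: complex vec)" "M \<in> carrier_mat n n \<Longrightarrow> M *\<^sub>v 0\<^sub>v n = (0\<^sub>v n :: complex vec)"
  by (intro eq_vecI; auto simp: scalar_prod_def)+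

lemma mat_eq_by_vec:
  fixes X Y :: "complex mat"
  assumes "X \<in> carrier_mat n n" "Y \<in> carrier_mat n n" "\<And>v. v \<in> carrier_vec n \<Longrightarrow> X *\<^sub>v v = Y *\<^sub>v v"
  shows "X = Y"
proof (rule eq_matI)
  fix i j assume ij: "i < dim_row Y" "j < dim_col Y"
  have "(X *\<^sub>v unit_vec n j) $ i = (Y *\<^sub>v unit_vec n j) $ i" using assms(3)[of "unit_vec n j"] by simp
  thus "X $$ (i, j) = Y $$ (i, j)" using assms(1,2) ij by (simp add: scalar_prod_right_unit)
qed (use assms in auto)

lemma ip_mult:
  assumes "M \<in> carrier_mat n n" "r \<in> carrier_vec n" "x \<in> carrier_vec n"
  shows "ip n (M *\<^sub>v r) x = ip n r (adjm n M *\<^sub>v x)"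
proof -
  have "ip n (M *\<^sub>v r) x = (\<Sum>i<n. (\<Sum>j<n. M$$(i,j) * r$j) * cnj (x$i))"
    unfolding ip_def using assms by (intro sum.cong) (auto simp: scalar_prod_def atLeast0LessThan)
  also have "\<dots> = (\<Sum>j<n. r$j * (\<Sum>i<n. M$$(i,j) * cnj (x$i)))"
    apply (simp add: sum_distrib_left sum_distrib_right)
    apply (subst sum.swap)
    apply (simp add: mult_ac)
    done
  also have "\<dots> = ip n r (adjm n M *\<^sub>v x)"
    unfolding ip_def using assms
    by (intro sum.cong) (auto simp: scalar_prod_def atLeast0LessThan adjm_def cnj_sum mult.commute)
  finally show ?thesis .
qed

lemma tmodule_subsp: "tmodule n T W \<Longrightarrow> subsp n W"
  unfolding tmodule_def subsp_def by auto

lemma exists_irred: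
  assumes "tmodule n T U" "U \<noteq> {0\<^sub>v n}"
  shows "\<exists>W. irreducible_tmodule n T W \<and> W \<subseteq> U"
proof -
  let ?P = "\<lambda>W. tmodule n T W \<and> W \<subseteq> U \<and> W \<noteq> {0\<^sub>v n}"
  obtain W where W: "?P W" "\<forall>W'. ?P W' \<longrightarrow> card (lead n W) \<le> card (lead n W')"
    using ex_has_least_nat[of ?P U "\<lambda>W. card (lead n W)"] assms by auto
  have "irreducible_tmodule n T W"
    unfolding irreducible_tmodule_def
  proof (intro conjI allI impI)
    fix W' assume W': "tmodule n T W' \<and> W' \<subseteq> W"
    show "W' = {0\<^sub>v n} \<or> W' = W"
    proof (rule ccontr)
      assume c: "\<not> (W' = {0\<^sub>v n} \<or> W' = W)"
      hence "?P W'" using W W' by auto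
      hence "card (lead n W) \<le> card (lead n W')" using W by auto
      moreover have "card (lead n W') < card (lead n W)"
        using lead_card_less[of n W W'] tmodule_subsp W W' c by auto
      ultimately show False by simp
    qed
  qed (use W in auto)
  thus ?thesis using W by auto
qed

inductive_set isum :: "nat \<Rightarrow> complex mat set \<Rightarrow> complex vec set" for n T where
  z: "0\<^sub>v n \<in> isum n T"
| s: "irreducible_tmodule n T W \<Longrightarrow> w \<in> W \<Longrightarrow> s \<in> isum n T \<Longrightarrow> w + s \<in> isum n T"

lemma irr_carrier: "irreducible_tmodule n T W \<Longrightarrow> w \<in> W \<Longrightarrow> w \<in> carrier_vec n"
  unfolding irreducible_tmodule_def tmodule_def by auto

lemma isum_carrier: "v \<in> isum n T \<Longrightarrow> v \<in> carrier_vec n"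
  by (induction rule: isum.induct) (auto dest: irr_carrier)

lemma isum_add: "u \<in> isum n T \<Longrightarrow> v \<in> isum n T \<Longrightarrow> u + v \<in> isum n T"
proof (induction rule: isum.induct)
  case z
  then show ?case using isum_carrier by auto
next
  case (s W w s)
  have c: "w \<in> carrier_vec n" "s \<in> carrier_vec n" "v \<in> carrier_vec n"
    using s isum_carrier irr_carrier by auto
  have "w + s + v = w + (s + v)" using assoc_add_vec[OF c] .
  then show ?case using s isum.s[where W=W and w=w and s="s+v"] by simp
qed

lemma isum_smult: "u \<in> isum n T \<Longrightarrow> c \<cdot>\<^sub>v u \<in> isum n T"
proof (induction rule: isum.induct)
  case z
  then show ?case by (auto intro: isum.z simp: zero_lemmas)
next
  case (s W w s)
  have c: "w \<in> carrier_vec n" "s \<in> carrier_vec n"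
    using s isum_carrier irr_carrier by auto
  have "c \<cdot>\<^sub>v (w + s) = c \<cdot>\<^sub>v w + c \<cdot>\<^sub>v s" using smult_add_distrib_vec[OF c] .
  moreover have "c \<cdot>\<^sub>v w \<in> W" using s unfolding irreducible_tmodule_def tmodule_def by auto
  ultimately show ?case using s isum.s[where W=W and w="c \<cdot>\<^sub>v w" and s="c \<cdot>\<^sub>v s"] by simp
qed

lemma isum_mult:
  assumes HT: "\<forall>M\<in>T. M \<in> carrier_mat n n"
  shows "u \<in> isum n T \<Longrightarrow> M \<in> T \<Longrightarrow> M *\<^sub>v u \<in> isum n T"
proof (induction rule: isum.induct)
  case z
  then show ?case using HT by (auto intro: isum.z simp: zero_lemmas)
next
  case (s W w s)
  have c: "w \<in> carrier_vec n" "s \<in> carrier_vec n" "M \<in> carrier_mat n n"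
    using s isum_carrier irr_carrier HT by auto
  have "M *\<^sub>v (w + s) = M *\<^sub>v w + M *\<^sub>v s" using mult_add_distrib_mat_vec[OF c(3) c(1) c(2)] .
  moreover have "M *\<^sub>v w \<in> W" using s unfolding irreducible_tmodule_def tmodule_def by auto
  ultimately show ?case using s isum.s[where W=W and w="M *\<^sub>v w" and s="M *\<^sub>v s"] by simp
qed

lemma isum_all:
  assumes HT: "\<forall>M\<in>T. M \<in> carrier_mat n n" and Hadj: "\<forall>M\<in>T. adjm n M \<in> T"
    and v: "v \<in> carrier_vec n"
  shows "v \<in> isum n T"
proof -
  have sS: "subsp n (isum n T)" unfolding subsp_def
    using isum_carrier isum_add isum_smult isum.z by blast
  obtain s where s: "s \<in> isum n T" "\<forall>x\<in>isum n T. ip n (v - s) x = 0"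
    using proj_exists[OF sS v] by auto
  define R where "R = {r \<in> carrier_vec n. \<forall>x\<in>isum n T. ip n r x = 0}"
  have tR: "tmodule n T R"
    unfolding tmodule_def R_def
  proof (intro conjI ballI allI)
    show "0\<^sub>v n \<in> {r \<in> carrier_vec n. \<forall>x\<in>isum n T. ip n r x = 0}" by (auto simp: ip_zero_l)
  next
    fix M r assume M: "M \<in> T" and r: "r \<in> {r \<in> carrier_vec n. \<forall>x\<in>isum n T. ip n r x = 0}"
    have "\<forall>x\<in>isum n T. ip n (M *\<^sub>v r) x = 0"
    proof
      fix x assume x: "x \<in> isum n T"
      have "ip n (M *\<^sub>v r) x = ip n r (adjm n M *\<^sub>v x)" using ip_mult HT M r x isum_carrier by auto
      moreover have "adjm n M *\<^sub>v x \<in> isum n T" using isum_mult[OF HT x] Hadj M by auto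
      ultimately show "ip n (M *\<^sub>v r) x = 0" using r by auto
    qed
    thus "M *\<^sub>v r \<in> {r \<in> carrier_vec n. \<forall>x\<in>isum n T. ip n r x = 0}" using HT M r by auto
  qed (auto simp: ip_add_l ip_smult_l)
  have "R = {0\<^sub>v n}"
  proof (rule ccontr)
    assume "R \<noteq> {0\<^sub>v n}"
    then obtain W where W: "irreducible_tmodule n T W" "W \<subseteq> R" using exists_irred[OF tR] by auto
    then obtain w where w: "w \<in> W" "w \<noteq> 0\<^sub>v n" unfolding irreducible_tmodule_def tmodule_def by auto
    have wc: "w \<in> carrier_vec n" using irr_carrier W w by auto
    have "w + 0\<^sub>v n \<in> isum n T" using isum.s[OF W(1) w(1) isum.z] .
    hence "w \<in> isum n T" using wc by simp
    hence "ip n w w = 0" using W w unfolding R_def by auto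
    thus False using ip_self_zero wc w by auto
  qed
  moreover have "v - s \<in> R" unfolding R_def using s v isum_carrier by auto
  ultimately have "v - s = 0\<^sub>v n" by auto
  hence "v = s"
  proof (intro eq_vecI)
    fix i assume vs: "v - s = 0\<^sub>v n" and i: "i < dim_vec s"
    hence "(v - s) $ i = 0" using isum_carrier[OF s(1)] by simp
    thus "v $ i = s $ i" using i v isum_carrier[OF s(1)] by simp
  qed (use v isum_carrier[OF s(1)] in auto)
  thus ?thesis using s by simp
qed

lemma scalar_commute:
  assumes HT: "\<forall>M\<in>T. M \<in> carrier_mat n n" and Hadj: "\<forall>M\<in>T. adjm n M \<in> T"
    and sc: "acts_as_scalar n T X f" and M: "M \<in> T"
  shows "X * M = M * X"
proof -
  have Xc: "X \<in> carrier_mat n n" using sc unfolding acts_as_scalar_def by auto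
  have Mc: "M \<in> carrier_mat n n" using HT M by auto
  have "u \<in> isum n T \<Longrightarrow> (X * M) *\<^sub>v u = (M * X) *\<^sub>v u" for u
  proof (induction rule: isum.induct)
    case z
    then show ?case using Xc Mc by (simp add: zero_lemmas)
  next
    case (s W w s)
    have wc: "w \<in> carrier_vec n" using irr_carrier s by auto
    have sc': "s \<in> carrier_vec n" using isum_carrier s by auto
    have Mw: "M *\<^sub>v w \<in> W" using s M unfolding irreducible_tmodule_def tmodule_def by auto
    have "(X * M) *\<^sub>v w = X *\<^sub>v (M *\<^sub>v w)" using Xc Mc wc by simp
    also have "\<dots> = f W \<cdot>\<^sub>v (M *\<^sub>v w)" using sc s Mw unfolding acts_as_scalar_def by auto
    also have "\<dots> = M *\<^sub>v (f W \<cdot>\<^sub>v w)" using Mc wc by (simp add: mult_mat_vec)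
    also have "\<dots> = M *\<^sub>v (X *\<^sub>v w)" using sc s unfolding acts_as_scalar_def by auto
    also have "\<dots> = (M * X) *\<^sub>v w" using Xc Mc wc by simp
    finally have "(X * M) *\<^sub>v w = (M * X) *\<^sub>v w" .
    moreover have "X * M \<in> carrier_mat n n" "M * X \<in> carrier_mat n n" using Xc Mc by auto
    ultimately show ?case using s wc sc'
      by (simp add: mult_add_distrib_mat_vec[of _ n n])
  qed
  hence "\<And>v. v \<in> carrier_vec n \<Longrightarrow> (X * M) *\<^sub>v v = (M * X) *\<^sub>v v"
    using isum_all[OF HT Hadj] by blast
  thus ?thesis using Xc Mc by (intro mat_eq_by_vec[of _ n]) auto
qed


lemma talg_carrier:
  assumes "A \<in> carrier_mat n n" "B \<in> carrier_mat n n"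
  shows "M \<in> term_alg n A B \<Longrightarrow> M \<in> carrier_mat n n"
  by (induction rule: term_alg.induct) (use assms in auto)

lemma adjm_one: "adjm n (1\<^sub>m n) = 1\<^sub>m n"
  unfolding adjm_def by (intro eq_matI) auto
lemma adjm_add: "M \<in> carrier_mat n n \<Longrightarrow> N \<in> carrier_mat n n \<Longrightarrow> adjm n (M + N) = adjm n M + adjm n N"
  unfolding adjm_def by (intro eq_matI) auto
lemma adjm_smult: "M \<in> carrier_mat n n \<Longrightarrow> adjm n (c \<cdot>\<^sub>m M) = cnj c \<cdot>\<^sub>m adjm n M"
  unfolding adjm_def by (intro eq_matI) auto
lemma adjm_mult: "M \<in> carrier_mat n n \<Longrightarrow> N \<in> carrier_mat n n \<Longrightarrow> adjm n (M * N) = adjm n N * adjm n M"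
  unfolding adjm_def by (intro eq_matI) (auto simp: scalar_prod_def cnj_sum mult.commute)

lemma talg_adj:
  assumes "A \<in> carrier_mat n n" "B \<in> carrier_mat n n"
    "adjm n A \<in> term_alg n A B" "adjm n B \<in> term_alg n A B"
  shows "M \<in> term_alg n A B \<Longrightarrow> adjm n M \<in> term_alg n A B"
proof (induction rule: term_alg.induct)
  case one
  then show ?case by (simp add: adjm_one term_alg.one)
next
  case genA
  then show ?case using assms by simp
next
  case genAs
  then show ?case using assms by simp
next
  case (add M N)
  then show ?case using talg_carrier[OF assms(1,2)] by (simp add: adjm_add term_alg.add)
next
  case (mult M N)
  then show ?case using talg_carrier[OF assms(1,2)] by (simp add: adjm_mult term_alg.mult)
next
  case (smult M c)
  then show ?case using talg_carrier[OF assms(1,2)] by (simp add: adjm_smult term_alg.smult)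
qed

lemma interp:
  fixes g :: "complex \<Rightarrow> complex"
  shows "finite L \<Longrightarrow> \<exists>p. \<forall>z\<in>L. poly p z = g z"
proof (induction rule: finite_induct)
  case empty
  then show ?case by auto
next
  case (insert l L)
  then obtain p where p: "\<forall>z\<in>L. poly p z = g z" by auto
  define q where "q = (\<Prod>m\<in>L. [:-m, 1:])"
  have ql: "poly q l \<noteq> 0" unfolding q_def poly_prod using insert by auto
  have qz: "poly q z = 0" if "z \<in> L" for z unfolding q_def poly_prod
    using insert that by (intro prod_zero) auto
  define p' where "p' = p + smult ((g l - poly p l) / poly q l) q"
  have "\<forall>z\<in>insert l L. poly p' z = g z" unfolding p'_def using p ql qz by auto
  thus ?case by blast
qed

lemma sum_delta_mult: "i < (n::nat) \<Longrightarrow> (\<Sum>k\<in>{0..<n}. (if i = k then c else 0) * (f k :: complex)) = c * f i"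
proof -
  assume i: "i < n"
  have "(\<Sum>k\<in>{0..<n}. (if i = k then c else 0) * f k) = (\<Sum>k\<in>{0..<n}. if k = i then c * f k else 0)"
    by (intro sum.cong) auto
  also have "\<dots> = c * f i" using i sum.delta[of "{0..<n}" i "\<lambda>k. c * f k"] by simp
  finally show ?thesis .
qed

lemma diag_poly:
  fixes d :: "nat \<Rightarrow> complex"
  assumes Ac: "A \<in> carrier_mat n n" and B: "B = mat n n (\<lambda>(i,j). if i = j then d i else 0)"
  shows "mat n n (\<lambda>(i,j). if i = j then poly p (d i) else 0) \<in> term_alg n A B"
proof (induction p rule: pCons_induct)
  case 0
  have "mat n n (\<lambda>(i,j). if i = j then poly 0 (d i) else 0) = 0 \<cdot>\<^sub>m 1\<^sub>m n"
    by (intro eq_matI) auto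
  then show ?case by (simp add: term_alg.smult term_alg.one del: poly_0)
next
  case (pCons a p)
  let ?X = "mat n n (\<lambda>(i,j). if i = j then poly p (d i) else 0)"
  have "mat n n (\<lambda>(i,j). if i = j then poly (pCons a p) (d i) else 0) = a \<cdot>\<^sub>m 1\<^sub>m n + B * ?X"
  proof (intro eq_matI)
    fix i j assume ij: "i < dim_row (a \<cdot>\<^sub>m 1\<^sub>m n + B * ?X)" "j < dim_col (a \<cdot>\<^sub>m 1\<^sub>m n + B * ?X)"
    hence ij': "i < n" "j < n" using B by auto
    have "(B * ?X) $$ (i,j) = (\<Sum>k\<in>{0..<n}. (if i = k then d i else 0) * ?X $$ (k,j))"
      using ij' B by (simp add: scalar_prod_def)
    also have "\<dots> = d i * ?X $$ (i,j)" by (rule sum_delta_mult) (rule ij'(1))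
    finally show "mat n n (\<lambda>(i,j). if i = j then poly (pCons a p) (d i) else 0) $$ (i, j) =
       (a \<cdot>\<^sub>m 1\<^sub>m n + B * ?X) $$ (i, j)" using ij' B by auto
  qed (use B in auto)
  then show ?case using pCons B
    by (simp add: term_alg.add term_alg.mult term_alg.smult term_alg.one term_alg.genAs)
qed

lemma diag_adj:
  fixes d :: "nat \<Rightarrow> complex"
  assumes Ac: "A \<in> carrier_mat n n" and B: "B = mat n n (\<lambda>(i,j). if i = j then d i else 0)"
  shows "adjm n B \<in> term_alg n A B"
proof -
  obtain p where p: "\<forall>z\<in>d ` {..<n}. poly p z = cnj z" using interp[of "d ` {..<n}" cnj] by auto
  have "adjm n B = mat n n (\<lambda>(i,j). if i = j then poly p (d i) else 0)"
    unfolding adjm_def B using p by (intro eq_matI) auto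
  thus ?thesis using diag_poly[OF Ac B] by simp
qed


lemma right_inv_left:
  fixes X Xi :: "complex mat"
  assumes X: "X \<in> carrier_mat n n" and Xi: "Xi \<in> carrier_mat n n" and inv: "X * Xi = 1\<^sub>m n"
  shows "Xi * X = 1\<^sub>m n"
proof -
  obtain A' B' where res: "gauss_jordan X (1\<^sub>m n) = (A', B')" by force
  from gauss_jordan_transform[OF X _ res, of n undefined]
  obtain P where P: "P \<in> Units (ring_mat TYPE(complex) n undefined)" and id: "A' = P * X" by auto
  from P obtain Q where Q: "Q \<in> carrier_mat n n" "P * Q = 1\<^sub>m n" and Pc: "P \<in> carrier_mat n n"
    unfolding Units_def ring_mat_def by auto
  have A'c: "A' \<in> carrier_mat n n" using gauss_jordan_carrier(1)[OF X _ res, of n] by auto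
  have "A' = 1\<^sub>m n \<or> 0 < n \<and> row A' (n - 1) = 0\<^sub>v n"
    by (rule row_echelon_form_imp_1_or_0_row[OF A'c gauss_jordan_row_echelon[OF X res]])
  hence "A' = 1\<^sub>m n"
  proof
    assume a: "0 < n \<and> row A' (n - 1) = 0\<^sub>v n"
    let ?m = "n - 1"
    have m: "?m < n" using a by auto
    have "A' * Xi = P" unfolding id using Pc X Xi inv by simp
    hence "P * Q = A' * (Xi * Q)" using assoc_mult_mat[OF A'c Xi Q(1)] by simp
    hence "(P * Q) $$ (?m, ?m) = row A' ?m \<bullet> col (Xi * Q) ?m" using A'c Xi Q m by simp
    also have "\<dots> = 0" using a Xi Q m by simp
    finally have "(P * Q) $$ (?m, ?m) = 0" .
    thus ?thesis using Q m by simp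
  qed
  hence PX: "P * X = 1\<^sub>m n" using id by simp
  have "Xi = P" 
  proof -
    have "Xi = (P * X) * Xi" using PX Xi by simp
    also have "\<dots> = P" using Pc X Xi inv by simp
    finally show ?thesis .
  qed
  thus ?thesis using PX by simp
qed


definition comm :: "complex mat \<Rightarrow> complex mat \<Rightarrow> bool" where
  "comm P M \<longleftrightarrow> P * M = M * P"

lemma comm_add: "P \<in> carrier_mat n n \<Longrightarrow> Q \<in> carrier_mat n n \<Longrightarrow> M \<in> carrier_mat n n \<Longrightarrow>
  comm P M \<Longrightarrow> comm Q M \<Longrightarrow> comm (P + Q) M"
  unfolding comm_def by (simp add: add_mult_distrib_mat[of _ n n] mult_add_distrib_mat[of _ n n])

lemma comm_mult: "P \<in> carrier_mat n n \<Longrightarrow> Q \<in> carrier_mat n n \<Longrightarrow> M \<in> carrier_mat n n \<Longrightarrow>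
  comm P M \<Longrightarrow> comm Q M \<Longrightarrow> comm (P * Q) M"
  unfolding comm_def
proof -
  assume c: "P \<in> carrier_mat n n" "Q \<in> carrier_mat n n" "M \<in> carrier_mat n n" and
    pm: "P * M = M * P" and qm: "Q * M = M * Q"
  have "P * Q * M = P * (Q * M)" using c by simp
  also have "\<dots> = P * (M * Q)" using qm by simp
  also have "\<dots> = (P * M) * Q" using c by simp
  also have "\<dots> = (M * P) * Q" using pm by simp
  also have "\<dots> = M * (P * Q)" using c by simp
  finally show "P * Q * M = M * (P * Q)" .
qed

lemma comm_smult: "P \<in> carrier_mat n n \<Longrightarrow> M \<in> carrier_mat n n \<Longrightarrow>
  comm P M \<Longrightarrow> comm (c \<cdot>\<^sub>m P) M"
  unfolding comm_def by (simp add: mult_smult_assoc_mat[of _ n n] mult_smult_distrib[of _ n n])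

lemma inv_comm:
  assumes c: "X \<in> carrier_mat n n" "Xi \<in> carrier_mat n n" "M \<in> carrier_mat n n"
    and inv: "X * Xi = 1\<^sub>m n" and xm: "comm X M"
  shows "comm Xi M"
proof -
  have iv: "Xi * X = 1\<^sub>m n" using right_inv_left[OF c(1,2) inv] .
  have "Xi * M = (Xi * M) * (X * Xi)" using c inv by simp
  also have "\<dots> = Xi * (M * X) * Xi" using c by (simp add: assoc_mult_mat[of _ n n _ n _ n])
  also have "\<dots> = Xi * (X * M) * Xi" using xm unfolding comm_def by simp
  also have "\<dots> = (Xi * X) * M * Xi" using c by (simp add: assoc_mult_mat[of _ n n _ n _ n])
  also have "\<dots> = M * Xi" using iv c by simp
  finally show ?thesis unfolding comm_def .
qed

lemma comm_zrhs:
  assumes "X \<in> carrier_mat n n" "Xi \<in> carrier_mat n n" "L \<in> carrier_mat n n" "Li \<in> carrier_mat n n"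
    "Y \<in> carrier_mat n n" "Yi \<in> carrier_mat n n" "Z \<in> carrier_mat n n" "Zi \<in> carrier_mat n n"
    "M \<in> carrier_mat n n"
    "comm X M" "comm Xi M" "comm L M" "comm Li M" "comm Y M" "comm Yi M" "comm Z M" "comm Zi M"
  shows "comm (zrhs q X Xi L Li Y Yi Z Zi) M"
  unfolding zrhs_def using assms
  by (intro comm_smult[of _ n] comm_add[of _ n] comm_mult[of _ n]) auto

lemma talg_diff: "A \<in> carrier_mat n n \<Longrightarrow> B \<in> carrier_mat n n \<Longrightarrow>
  P \<in> term_alg n A B \<Longrightarrow> Q \<in> term_alg n A B \<Longrightarrow> P - Q \<in> term_alg n A B"
proof -
  assume c: "A \<in> carrier_mat n n" "B \<in> carrier_mat n n" and P: "P \<in> term_alg n A B" and Q: "Q \<in> term_alg n A B"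
  have "P \<in> carrier_mat n n" "Q \<in> carrier_mat n n" using talg_carrier[OF c] P Q by auto
  hence "P - Q = P + (-1) \<cdot>\<^sub>m Q" by (intro eq_matI) auto
  thus ?thesis using P Q by (simp add: term_alg.add term_alg.smult)
qed

lemma talg_zlhs: "A \<in> carrier_mat n n \<Longrightarrow> B \<in> carrier_mat n n \<Longrightarrow>
  X \<in> term_alg n A B \<Longrightarrow> Y \<in> term_alg n A B \<Longrightarrow> Z \<in> term_alg n A B \<Longrightarrow> zlhs q X Y Z \<in> term_alg n A B"
  unfolding zlhs_def
  by (intro term_alg.add term_alg.smult talg_diff term_alg.mult) auto

theorem theorem5p13:
  fixes n :: nat and G :: "nat \<Rightarrow> nat \<Rightarrow> bool" and D x :: nat
    and Eid :: "nat \<Rightarrow> complex mat" and th ths :: "nat \<Rightarrow> complex"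
    and q w u v ws us vs a b :: complex
    and T :: "complex mat set"
    and A As AA BB C Ma Mai Mb Mbi Mc Mci Mlam Mlami :: "complex mat"
    and cW :: "complex vec set \<Rightarrow> complex"
  assumes q: "q \<noteq> 0" "q ^ 4 \<noteq> 1"
    and drg: "distance_regular n G" "D = diameter n G" "3 \<le> D"
    and idem: "primitive_idempotents n G D Eid"
      "Eid 0 = (1 / of_nat n) \<cdot>\<^sub>m all_ones n"
      "q_polynomial_ordering n Eid D"
    and adj: "A = adj_mat n G" "A = msum n (\<lambda>i. th i \<cdot>\<^sub>m Eid i) {..D}"
    and base: "x < n"
    and dual: "As = dual_adj n Eid x" "As = msum n (\<lambda>i. ths i \<cdot>\<^sub>m dual_idem n G x i) {..D}"
    and Tdef: "T = term_alg n A As"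
    and racah: "\<forall>i\<le>D. th i = w + u * q powi (2 * int i - int D) + v * q powi (int D - 2 * int i)"
      "\<forall>i\<le>D. ths i = ws + us * q powi (2 * int i - int D) + vs * q powi (int D - 2 * int i)"
      "u \<noteq> 0" "v \<noteq> 0" "us \<noteq> 0" "vs \<noteq> 0"
    and ab: "a ^ 2 = u / v" "b ^ 2 = us / vs"
    and bold: "AA = (1 / (a * v)) \<cdot>\<^sub>m (A - w \<cdot>\<^sub>m 1\<^sub>m n)"
      "BB = (1 / (b * vs)) \<cdot>\<^sub>m (As - ws \<cdot>\<^sub>m 1\<^sub>m n)"
    and thin: "\<forall>W. irreducible_tmodule n T W \<longrightarrow> thin_module n G x W"
    and cdef: "\<forall>W. irreducible_tmodule n T W \<longrightarrow>
                   cW W ^ 2 - mod_kappa n G Eid D x q a b AA W * cW W + 1 = 0"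
      "\<forall>W W'. irreducible_tmodule n T W \<longrightarrow> irreducible_tmodule n T W' \<longrightarrow>
                   mod_iso n T W W' \<longrightarrow> cW W = cW W'"
    and ops: "acts_as_scalar n T Ma (mod_a n G Eid D x q a)"
      "acts_as_scalar n T Mb (mod_b n G D x q b)"
      "acts_as_scalar n T Mc cW"
      "acts_as_scalar n T Mlam (\<lambda>W. q ^ (mod_diameter n G x W + 1))"
    and invs: "Mai \<in> carrier_mat n n" "Ma * Mai = 1\<^sub>m n"
      "Mbi \<in> carrier_mat n n" "Mb * Mbi = 1\<^sub>m n"
      "Mci \<in> carrier_mat n n" "Mc * Mci = 1\<^sub>m n"
      "Mlami \<in> carrier_mat n n" "Mlam * Mlami = 1\<^sub>m n"
    and C: "C \<in> T"
      "zlhs q AA BB C = zrhs q Ma Mai Mlam Mlami Mb Mbi Mc Mci"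
      "zlhs q BB C AA = zrhs q Mb Mbi Mlam Mlami Mc Mci Ma Mai"
      "zlhs q C AA BB = zrhs q Mc Mci Mlam Mlami Ma Mai Mb Mbi"
    and Cuniq: "\<forall>C'\<in>T. zlhs q AA BB C' = zrhs q Ma Mai Mlam Mlami Mb Mbi Mc Mci \<and>
                   zlhs q BB C' AA = zrhs q Mb Mbi Mlam Mlami Mc Mci Ma Mai \<and>
                   zlhs q C' AA BB = zrhs q Mc Mci Mlam Mlami Ma Mai Mb Mbi \<longrightarrow> C' = C"
  shows "central_in T (zlhs q AA BB C) \<and> central_in T (zlhs q BB C AA) \<and>
         central_in T (zlhs q C AA BB)"
proof -
  have sg: "simple_graph n G" using drg(1) unfolding distance_regular_def by auto
  have Ac: "A \<in> carrier_mat n n" using adj(1) unfolding adj_mat_def by auto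
  have Asc: "As \<in> carrier_mat n n" using dual(1) unfolding dual_adj_def by auto
  have adjA: "adjm n A = A" unfolding adj(1) adj_mat_def adjm_def using sg unfolding simple_graph_def
    by (intro eq_matI) auto
  have AsD: "As = mat n n (\<lambda>(i,j). if i = j then (\<lambda>y. of_nat n * Eid 1 $$ (x, y)) i else 0)"
    unfolding dual(1) dual_adj_def by simp
  have adjAs: "adjm n As \<in> T" unfolding Tdef by (rule diag_adj[OF Ac AsD])
  have HT: "\<forall>M\<in>T. M \<in> carrier_mat n n" using talg_carrier[OF Ac Asc] Tdef by auto
  have Hadj: "\<forall>M\<in>T. adjm n M \<in> T" using talg_adj[OF Ac Asc] adjA adjAs Tdef term_alg.genA by auto
  have AAT: "AA \<in> T" unfolding bold(1) Tdef
    by (intro term_alg.smult talg_diff[OF Ac Asc] term_alg.genA term_alg.one)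
  have BBT: "BB \<in> T" unfolding bold(2) Tdef
    by (intro term_alg.smult talg_diff[OF Ac Asc] term_alg.genAs term_alg.one)
  have CT: "C \<in> T" using C(1) .
  have mc: "Ma \<in> carrier_mat n n" "Mb \<in> carrier_mat n n" "Mc \<in> carrier_mat n n" "Mlam \<in> carrier_mat n n"
    using ops unfolding acts_as_scalar_def by auto
  have key: "comm (zrhs q Ma Mai Mlam Mlami Mb Mbi Mc Mci) M \<and>
             comm (zrhs q Mb Mbi Mlam Mlami Mc Mci Ma Mai) M \<and>
             comm (zrhs q Mc Mci Mlam Mlami Ma Mai Mb Mbi) M" if M: "M \<in> T" for M
  proof -
    have Mc: "M \<in> carrier_mat n n" using HT M by auto
    have c1: "comm Ma M" "comm Mb M" "comm Mc M" "comm Mlam M"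
      using scalar_commute[OF HT Hadj _ M] ops unfolding comm_def by auto
    have c2: "comm Mai M" "comm Mbi M" "comm Mci M" "comm Mlami M"
      using inv_comm[OF _ _ Mc] c1 mc invs by auto
    show ?thesis using comm_zrhs[of _ n] mc invs Mc c1 c2 by auto
  qed
  have T1: "zlhs q AA BB C \<in> T" "zlhs q BB C AA \<in> T" "zlhs q C AA BB \<in> T"
    using talg_zlhs[OF Ac Asc] AAT BBT CT Tdef by auto
  show ?thesis unfolding central_in_def using T1 key C(2-4) unfolding comm_def by auto
qed

end
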